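(* Let $\rho$ be a subnormalized state and $\Gamma$ positive semidefinite, let $\mathcal M^\infty$ be as below, $q\ge0$, $\eta\in(0,\operatorname{tr}\rho]$, $g\in(0,1)$. If $\mathcal M^\infty$ is $q$-quasiuniversal with respect to $\Gamma$, then with $\eta_g=(1-g)\eta+g\operatorname{tr}\rho$, $$D^\eta_H(\rho\|\Gamma)\ge D^{\infty,\eta}_H(\rho\|\Gamma)\ge D^{\eta_g}_H(\rho\|\Gamma)-q-\log\frac{\operatorname{tr}\rho}{g\eta}.$$ If $\mathcal M^\infty$ is $q$-quasiuniversal with respect to $\mathbb 1$, then $H^\eta_H(\rho)\le H^{\infty,\eta}_H(\rho)\le H^{\eta_g}_H(\rho)+q+\log\frac{\operatorname{tr}\rho}{g\eta}$.
   Context: Natural logarithms; subnormalized state = positive semidefinite with trace $\le1$; POVM effect = $0\le Q\le\mathbb 1$. $\{\mathcal M^r\}_{r\ge0}$ is a family of sets of POVM effects on the system with $\mathbb 1\in\mathcal M^0$ and $\mathcal M^r\subseteq\mathcal M^{r'}$ for $r\le r'$; $\mathcal M^\infty$ is the topological closure of $\bigcup_{r\ge0}\mathcal M^r$. $D^{\infty,\eta}_H(\rho\|\Gamma)=-\log\inf\{\operatorname{tr}(Q\Gamma)/\operatorname{tr}(Q\rho): Q\in\mathcal M^\infty,\operatorname{tr}(Q\rho)\ge\eta\}$ and $H^{\infty,\eta}_H(\rho)=-D^{\infty,\eta}_H(\rho\|\mathbb 1)$. Hypothesis-testing relative entropy $D^\eta_H(\rho\|\Gamma)=-\log\min\{\operatorname{tr}(Q\Gamma)/\eta: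 0\le Q\le\mathbb 1,\operatorname{tr}(Q\rho)\ge\eta\}$, $H^\eta_H(\rho)=-D^\eta_H(\rho\|\mathbb 1)$. $\mathcal M^\infty$ is $q$-quasiuniversal with respect to $\Gamma$ if for every POVM effect $Q$ with $\|Q\|_\infty=1$ and every $g\in(0,1)$ there exist $\tilde Q,\tilde Q'\in\mathcal M^\infty$ with $g\tilde Q\le Q\le(1-g)\tilde Q'+g\mathbb 1$ and $\log\operatorname{tr}(\tilde Q'\Gamma)-\log\operatorname{tr}(\tilde Q\Gamma)\le q$. *)

theory Defs
  imports "HOL-Analysis.Analysis"
begin

type_synonym 'n cmat = "complex^'n^'n"

definition qform :: "'n::finite cmat \<Rightarrow> complex^'n \<Rightarrow> complex" where
  "qform A v = (\<Sum>i\<in>UNIV. cnj (v $ i) * ((A *v v) $ i))"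

definition cadj :: "'n::finite cmat \<Rightarrow> 'n cmat" where
  "cadj A = (\<chi> i j. cnj (A $ j $ i))"

definition psd :: "'n::finite cmat \<Rightarrow> bool" where
  "psd A \<longleftrightarrow> cadj A = A \<and> (\<forall>v. Im (qform A v) = 0 \<and> 0 \<le> Re (qform A v))"

definition loewner_le :: "'n::finite cmat \<Rightarrow> 'n cmat \<Rightarrow> bool" where
  "loewner_le A B \<longleftrightarrow> psd (B - A)"

definition tr :: "'n::finite cmat \<Rightarrow> real" where
  "tr A = Re (trace A)"

definition subnormalized_state :: "'n::finite cmat \<Rightarrow> bool" where
  "subnormalized_state \<rho> \<longleftrightarrow> psd \<rho> \<and> tr \<rho> \<le> 1"

definition povm_effect :: "'n::finite cmat \<Rightarrow> bool" where
  "povm_effect Q \<longleftrightarrow> loewner_le 0 Q \<and> loewner_le Q (mat 1)"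

definition opnorm :: "'n::finite cmat \<Rightarrow> real" where
  "opnorm Q = onorm (\<lambda>v. Q *v v)"

definition eln :: "real \<Rightarrow> ereal" where
  "eln x = (if 0 < x then ereal (ln x) else -\<infinity>)"

definition Minf :: "(real \<Rightarrow> 'n::finite cmat set) \<Rightarrow> 'n cmat set" where
  "Minf M = closure (\<Union>r\<in>{0..}. M r)"

definition measurement_family :: "(real \<Rightarrow> 'n::finite cmat set) \<Rightarrow> bool" where
  "measurement_family M \<longleftrightarrow>
     (\<forall>r\<ge>0. \<forall>Q\<in>M r. povm_effect Q) \<and> mat 1 \<in> M 0 \<and>
     (\<forall>r r'. 0 \<le> r \<and> r \<le> r' \<longrightarrow> M r \<subseteq> M r')"

definition DinfH :: "(real \<Rightarrow> 'n::finite cmat set) \<Rightarrow> real \<Rightarrow> 'n cmat \<Rightarrow> 'n cmat \<Rightarrow> ereal" where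
  "DinfH M \<eta> \<rho> \<Gamma> =
     - eln (Inf {tr (Q ** \<Gamma>) / tr (Q ** \<rho>) | Q. Q \<in> Minf M \<and> tr (Q ** \<rho>) \<ge> \<eta>})"

definition HinfH :: "(real \<Rightarrow> 'n::finite cmat set) \<Rightarrow> real \<Rightarrow> 'n cmat \<Rightarrow> ereal" where
  "HinfH M \<eta> \<rho> = - DinfH M \<eta> \<rho> (mat 1)"

text \<open>Hypothesis-testing relative entropy (the minimum is written as an infimum).\<close>
definition DH :: "real \<Rightarrow> 'n::finite cmat \<Rightarrow> 'n cmat \<Rightarrow> ereal" where
  "DH \<eta> \<rho> \<Gamma> =
     - eln (Inf {tr (Q ** \<Gamma>) / \<eta> | Q. povm_effect Q \<and> tr (Q ** \<rho>) \<ge> \<eta>})"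

definition HH :: "real \<Rightarrow> 'n::finite cmat \<Rightarrow> ereal" where
  "HH \<eta> \<rho> = - DH \<eta> \<rho> (mat 1)"

text \<open>q-quasiuniversality. The condition log tr(Q'G) - log tr(QG) \<le> q is written
  multiplicatively (exponentiated), which also covers vanishing traces.\<close>
definition quasiuniversal :: "real \<Rightarrow> 'n::finite cmat set \<Rightarrow> 'n cmat \<Rightarrow> bool" where
  "quasiuniversal q MI \<Gamma> \<longleftrightarrow>
     (\<forall>Q g. povm_effect Q \<and> opnorm Q = 1 \<and> 0 < g \<and> g < 1 \<longrightarrow>
        (\<exists>Qt Qt'. Qt \<in> MI \<and> Qt' \<in> MI \<and>
           loewner_le (g *\<^sub>R Qt) Q \<and>
           loewner_le Q ((1 - g) *\<^sub>R Qt' + g *\<^sub>R mat 1) \<and>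
           tr (Qt' ** \<Gamma>) \<le> exp q * tr (Qt ** \<Gamma>)))"

end

theory Submission
  imports Defs
begin


lemma herm_entry: assumes "cadj A = A" shows "A $ i $ j = cnj (A $ j $ i)"
proof -
  have "cadj A $ i $ j = cnj (A $ j $ i)" by (simp add: cadj_def)
  then show ?thesis using assms by simp
qed

lemma cs: "c *\<^sub>R (z::complex) = complex_of_real c * z"
  by (simp add: scaleR_conv_of_real)

lemma inner_cvec: "x \<bullet> y = Re (\<Sum>i\<in>UNIV. cnj (x$i) * y$i)" for x y :: "complex^'n::finite"
  by (simp add: inner_vec_def inner_complex_def)

lemma Re_qform: "Re (qform A v) = v \<bullet> (A *v v)"
  by (simp add: qform_def inner_cvec)

lemma mv_scaleR: "A *v (c *\<^sub>R x) = c *\<^sub>R (A *v x)" for A :: "'n::finite cmat"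
  by (simp add: vec_eq_iff matrix_vector_mult_def cs sum_distrib_left algebra_simps)

lemma scaleR_mv: "(c *\<^sub>R A) *v x = c *\<^sub>R (A *v x)" for A :: "'n::finite cmat"
  by (simp add: vec_eq_iff matrix_vector_mult_def cs sum_distrib_left algebra_simps)

lemma rc: "Re (cnj z) = Re z" by simp

lemma herm_sym:
  fixes A :: "'n::finite cmat"
  assumes "cadj A = A"
  shows "x \<bullet> (A *v y) = y \<bullet> (A *v x)"
proof -
  have "x \<bullet> (A *v y) = Re (\<Sum>i\<in>UNIV. \<Sum>j\<in>UNIV. cnj (x$i) * A$i$j * y$j)"
    by (simp add: inner_cvec matrix_vector_mult_def sum_distrib_left mult.assoc)
  also have "\<dots> = Re (\<Sum>j\<in>UNIV. \<Sum>i\<in>UNIV. cnj (x$i) * A$i$j * y$j)"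
    by (subst sum.swap) (rule refl)
  also have "\<dots> = Re (cnj (\<Sum>j\<in>UNIV. \<Sum>i\<in>UNIV. cnj (y$j) * A$j$i * x$i))"
  proof -
    have "(\<Sum>j\<in>UNIV. \<Sum>i\<in>UNIV. cnj (x$i) * A$i$j * y$j) = cnj (\<Sum>j\<in>UNIV. \<Sum>i\<in>UNIV. cnj (y$j) * A$j$i * x$i)"
      unfolding cnj_sum
    proof (intro sum.cong refl)
      fix i j
      have e: "A$i$j = cnj (A$j$i)" by (rule herm_entry[OF assms])
      show "cnj (x$i) * A$i$j * y$j = cnj (cnj (y$j) * A$j$i * x$i)"
        unfolding e by (simp add: algebra_simps)
    qed
    then show ?thesis by simp
  qed
  also have "\<dots> = Re (\<Sum>j\<in>UNIV. \<Sum>i\<in>UNIV. cnj (y$j) * A$j$i * x$i)"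
    by (rule rc)
  also have "\<dots> = y \<bullet> (A *v x)"
    by (simp only: inner_cvec matrix_vector_mult_def sum_distrib_left mult.assoc vec_lambda_beta)
  finally show ?thesis .
qed

lemma herm_Im:
  fixes A :: "'n::finite cmat"
  assumes "cadj A = A"
  shows "Im (qform A v) = 0"
proof -
  have "cnj (qform A v) = qform A v"
  proof -
    have "cnj (qform A v) = (\<Sum>i\<in>UNIV. \<Sum>j\<in>UNIV. cnj (cnj (v$i) * A$i$j * v$j))"
      by (simp add: qform_def matrix_vector_mult_def sum_distrib_left mult.assoc)
    also have "\<dots> = (\<Sum>i\<in>UNIV. \<Sum>j\<in>UNIV. cnj (v$j) * A$j$i * v$i)"
    proof (intro sum.cong refl)
      fix i j
      have e: "A$i$j = cnj (A$j$i)" by (rule herm_entry[OF assms])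
      show "cnj (cnj (v$i) * A$i$j * v$j) = cnj (v$j) * A$j$i * v$i"
        unfolding e by (simp add: algebra_simps)
    qed
    also have "\<dots> = (\<Sum>j\<in>UNIV. \<Sum>i\<in>UNIV. cnj (v$j) * A$j$i * v$i)"
      by (rule sum.swap)
    also have "\<dots> = qform A v"
      by (simp add: qform_def matrix_vector_mult_def sum_distrib_left mult.assoc)
    finally show ?thesis .
  qed
  then show ?thesis by (metis Reals_cnj_iff complex_is_Real_iff)
qed

lemma psd_iff: "psd A \<longleftrightarrow> cadj A = A \<and> (\<forall>v. 0 \<le> v \<bullet> (A *v v))"
  by (auto simp: psd_def herm_Im Re_qform[symmetric])

lemma cadj_add: "cadj (A + B) = cadj A + cadj B"
  by (simp add: cadj_def vec_eq_iff)
lemma cadj_diff: "cadj (A - B) = cadj A - cadj B"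
  by (simp add: cadj_def vec_eq_iff)
lemma cadj_scaleR: "cadj (c *\<^sub>R A) = c *\<^sub>R cadj A"
  by (simp add: cadj_def vec_eq_iff cs)
lemma cadj_one: "cadj (mat 1 :: 'n::finite cmat) = mat 1"
  by (simp add: cadj_def vec_eq_iff mat_def)

lemma psd_add: "psd A \<Longrightarrow> psd B \<Longrightarrow> psd (A + B)"
  by (simp add: psd_iff cadj_add matrix_vector_mult_add_rdistrib inner_add_right)

lemma psd_scaleR: "psd A \<Longrightarrow> 0 \<le> c \<Longrightarrow> psd (c *\<^sub>R A)"
  by (simp add: psd_iff cadj_scaleR scaleR_mv)

lemma psd_one: "psd (mat 1 :: 'n::finite cmat)"
  by (simp add: psd_iff cadj_one)

lemma psd_zero: "psd (0 :: 'n::finite cmat)"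
  by (simp add: psd_iff cadj_def vec_eq_iff)


lemma psd_cs:
  fixes A :: "'n::finite cmat"
  assumes "psd A"
  shows "(x \<bullet> (A *v y))^2 \<le> (x \<bullet> (A *v x)) * (y \<bullet> (A *v y))"
proof -
  define a where "a = x \<bullet> (A *v x)"
  define b where "b = x \<bullet> (A *v y)"
  define c where "c = y \<bullet> (A *v y)"
  have h: "cadj A = A" "\<And>v. 0 \<le> v \<bullet> (A *v v)" using assms by (auto simp: psd_iff)
  have sy: "y \<bullet> (A *v x) = b" unfolding b_def by (rule herm_sym[OF h(1), symmetric])
  have q: "0 \<le> a + 2*t*b + t^2*c" for t
  proof -
    have "(x + t *\<^sub>R y) \<bullet> (A *v (x + t *\<^sub>R y)) = a + t * b + t * (y \<bullet> (A *v x)) + t*t*c"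
      by (simp add: a_def b_def c_def matrix_vector_right_distrib mv_scaleR inner_add_left
          inner_add_right algebra_simps)
    then show ?thesis using h(2)[of "x + t *\<^sub>R y"] sy by (simp add: power2_eq_square algebra_simps)
  qed
  have c0: "0 \<le> c" unfolding c_def by (rule h(2))
  show ?thesis
  proof (cases "c = 0")
    case True
    have "b = 0"
    proof (rule ccontr)
      assume "b \<noteq> 0"
      have "0 \<le> a + 2*(-(a+1)/(2*b))*b" using q[of "-(a+1)/(2*b)"] True by simp
      also have "\<dots> = -1" using \<open>b \<noteq> 0\<close> by (simp add: field_simps)
      finally show False by simp
    qed
    then show ?thesis using True by (simp add: a_def[symmetric] b_def[symmetric] c_def[symmetric])
  next
    case False
    then have cp: "0 < c" using c0 by simp
    have "0 \<le> a + 2*(-b/c)*b + (-b/c)^2*c" by (rule q)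
    also have "\<dots> = a - b^2/c" using cp by (simp add: field_simps power2_eq_square)
    finally have "b^2/c \<le> a" by simp
    then have "b^2 \<le> a * c" using cp by (simp add: field_simps)
    then show ?thesis by (simp add: a_def b_def c_def)
  qed
qed

lemma mv_axis: "(A *v axis j c) $ k = A $ k $ j * c" for A :: "'n::finite cmat"
  by (simp add: matrix_vector_mult_def axis_def if_distrib cong: if_cong)

lemma axis_inner: "axis j c \<bullet> (w::complex^'n::finite) = Re (cnj c * w $ j)"
proof -
  have "(\<Sum>i\<in>UNIV. cnj (axis j c $ i) * w$i) = (\<Sum>i\<in>UNIV. if i = j then cnj c * w$j else 0)"
    by (rule sum.cong) (auto simp: axis_def)
  then show ?thesis by (simp add: inner_cvec)
qed

lemma psd_col_zero:
  fixes B :: "'n::finite cmat"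
  assumes "psd B" "B $ j $ j = 0"
  shows "B $ k $ j = 0"
proof -
  define y where "y = (axis j 1 :: complex^'n)"
  have yy: "y \<bullet> (B *v y) = 0" using assms(2) by (simp add: y_def axis_inner mv_axis)
  have z: "x \<bullet> (B *v y) = 0" for x
    using psd_cs[OF assms(1), of x y] yy by simp
  have "B *v y = 0" using z[of "B *v y"] by simp
  then have "(B *v y) $ k = 0" by simp
  then show ?thesis by (simp add: y_def mv_axis)
qed

lemma tr_mult: "trace (A ** B) = (\<Sum>i\<in>UNIV. \<Sum>k\<in>UNIV. A$i$k * B$k$i)"
  by (simp add: trace_def matrix_matrix_mult_def)


lemma psd_zero_diag:
  fixes B :: "'n::finite cmat"
  assumes "psd B" "\<forall>i. B $ i $ i = 0"
  shows "B = 0"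
  using psd_col_zero[OF assms(1)] assms(2) by (simp add: vec_eq_iff)

lemma herm_diag_real:
  fixes B :: "'n::finite cmat"
  assumes "cadj B = B"
  shows "B $ i $ i = complex_of_real (Re (B $ i $ i))"
proof -
  have "B $ i $ i = cnj (B $ i $ i)" by (rule herm_entry[OF assms])
  then have "Im (B $ i $ i) = 0" by (metis Reals_cnj_iff complex_is_Real_iff)
  then show ?thesis by (simp add: complex_eq_iff)
qed

lemma cs_bound:
  fixes B :: "'n::finite cmat"
  assumes "psd B"
  shows "(cmod (\<Sum>k\<in>UNIV. B$i$k * v$k))^2 \<le> (v \<bullet> (B *v v)) * Re (B $ i $ i)"
proof (cases "(\<Sum>k\<in>UNIV. B$i$k * v$k) = 0")
  case True
  have "0 \<le> v \<bullet> (B *v v)" "0 \<le> Re (B $ i $ i)"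
    using assms by (auto simp: psd_iff axis_inner mv_axis dest: spec[of _ "axis i 1"])
  then show ?thesis using True by simp
next
  case False
  define s where "s = (\<Sum>k\<in>UNIV. B$i$k * v$k)"
  have sp: "0 < cmod s" using False s_def by simp
  define \<alpha> where "\<alpha> = s / complex_of_real (cmod s)"
  have h: "cadj B = B" using assms by (simp add: psd_iff)
  have "v \<bullet> (B *v axis i \<alpha>) = Re (\<Sum>k\<in>UNIV. cnj (v$k) * (B$k$i * \<alpha>))"
    by (simp add: inner_cvec mv_axis)
  also have "\<dots> = Re (\<alpha> * cnj s)"
  proof -
    have "(\<Sum>k\<in>UNIV. cnj (v$k) * (B$k$i * \<alpha>)) = \<alpha> * cnj s"
      unfolding s_def cnj_sum sum_distrib_left
    proof (intro sum.cong refl)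
      fix k
      have e: "B$k$i = cnj (B$i$k)" by (rule herm_entry[OF h])
      show "cnj (v$k) * (B$k$i * \<alpha>) = \<alpha> * cnj (B$i$k * v$k)" unfolding e by simp
    qed
    then show ?thesis by simp
  qed
  also have "\<dots> = cmod s"
  proof -
    have "s * cnj s = complex_of_real ((cmod s)^2)" using complex_norm_square[of s] by simp
    then have "\<alpha> * cnj s = complex_of_real (cmod s)" using sp
      by (simp add: \<alpha>_def power2_eq_square field_simps)
    then show ?thesis by simp
  qed
  finally have e1: "v \<bullet> (B *v axis i \<alpha>) = cmod s" .
  have "axis i \<alpha> \<bullet> (B *v axis i \<alpha>) = Re (cnj \<alpha> * (B$i$i * \<alpha>))"
    by (simp add: axis_inner mv_axis)
  also have "\<dots> = Re (B$i$i) * (cmod \<alpha>)^2"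
  proof -
    have "cnj \<alpha> * (B$i$i * \<alpha>) = B$i$i * (\<alpha> * cnj \<alpha>)" by simp
    also have "\<dots> = B$i$i * complex_of_real ((cmod \<alpha>)^2)" by (simp only: complex_norm_square)
    also have "\<dots> = complex_of_real (Re (B$i$i) * (cmod \<alpha>)^2)"
      using herm_diag_real[OF h, of i] by (metis of_real_mult)
    finally show ?thesis by (simp only: Re_complex_of_real)
  qed
  also have "\<dots> = Re (B$i$i)"
    using sp by (simp add: \<alpha>_def norm_divide)
  finally have e2: "axis i \<alpha> \<bullet> (B *v axis i \<alpha>) = Re (B$i$i)" .
  show ?thesis using psd_cs[OF assms, of v "axis i \<alpha>"] e1 e2 s_def by simp
qed

lemma psd_trace_aux:
  fixes A :: "'n::finite cmat"
  assumes A: "psd A"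
  shows "psd B \<Longrightarrow> card {i. B $ i $ i \<noteq> 0} = n \<Longrightarrow> 0 \<le> Re (trace (A ** B))"
proof (induction n arbitrary: B rule: less_induct)
  case (less n B)
  show ?case
  proof (cases "\<forall>i. B $ i $ i = 0")
    case True
    then have "B = 0" using psd_zero_diag less.prems(1) by blast
    then show ?thesis by (simp add: trace_def)
  next
    case False
    then obtain i where i: "B $ i $ i \<noteq> 0" by blast
    have hB: "cadj B = B" using less.prems(1) by (simp add: psd_iff)
    define d where "d = Re (B $ i $ i)"
    have Bii: "B $ i $ i = complex_of_real d" unfolding d_def by (rule herm_diag_real[OF hB])
    have d0: "0 \<le> d" using less.prems(1)
      by (auto simp: psd_iff d_def axis_inner mv_axis dest: spec[of _ "axis i 1"])
    have dp: "0 < d" using d0 i Bii by (cases "d = 0") auto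
    define B' where "B' = (\<chi> j k. B$j$k - B$j$i * B$i$k / complex_of_real d)"
    define v where "v = (\<chi> k. B$k$i)"
    have split: "trace (A ** B) = trace (A ** B') + qform A v / complex_of_real d"
    proof -
      have "trace (A ** B) - trace (A ** B') =
          (\<Sum>j\<in>UNIV. \<Sum>k\<in>UNIV. A$j$k * (B$k$i * B$i$j) / complex_of_real d)"
        by (simp add: tr_mult B'_def sum_subtractf[symmetric] algebra_simps)
      also have "\<dots> = (\<Sum>j\<in>UNIV. \<Sum>k\<in>UNIV. cnj (B$j$i) * (A$j$k * B$k$i) / complex_of_real d)"
      proof (intro sum.cong refl)
        fix j k
        have e: "B$i$j = cnj (B$j$i)" by (rule herm_entry[OF hB])
        show "A$j$k * (B$k$i * B$i$j) / complex_of_real d =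
              cnj (B$j$i) * (A$j$k * B$k$i) / complex_of_real d"
          unfolding e by simp
      qed
      also have "\<dots> = qform A v / complex_of_real d"
        by (simp add: qform_def v_def matrix_vector_mult_def sum_divide_distrib sum_distrib_left)
      finally show ?thesis by (simp add: algebra_simps)
    qed
    have qA: "0 \<le> Re (qform A v / complex_of_real d)"
      using A dp by (simp add: Re_qform psd_iff Re_divide_of_real)
    have hB': "cadj B' = B'"
    proof -
      have "cnj (B$k$j - B$k$i * B$i$j / complex_of_real d) = B$j$k - B$j$i * B$i$k / complex_of_real d"
        for j k
      proof -
        have e1: "B$k$j = cnj (B$j$k)" by (rule herm_entry[OF hB])
        have e2: "B$k$i = cnj (B$i$k)" by (rule herm_entry[OF hB])
        have e3: "B$i$j = cnj (B$j$i)" by (rule herm_entry[OF hB])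
        show ?thesis unfolding e1 e2 e3 by (simp add: mult.commute)
      qed
      then show ?thesis by (simp add: cadj_def B'_def vec_eq_iff)
    qed
    have qB': "0 \<le> w \<bullet> (B' *v w)" for w
    proof -
      define s where "s = (\<Sum>k\<in>UNIV. B$i$k * w$k)"
      have "qform B' w = qform B w - cnj s * s / complex_of_real d"
      proof -
        have "qform B w - qform B' w =
            (\<Sum>j\<in>UNIV. \<Sum>k\<in>UNIV. cnj (w$j) * (B$j$i * B$i$k * w$k) / complex_of_real d)"
          by (simp add: qform_def matrix_vector_mult_def B'_def sum_subtractf[symmetric]
              sum_distrib_left algebra_simps)
        also have "\<dots> = (\<Sum>j\<in>UNIV. \<Sum>k\<in>UNIV. cnj (B$i$j * w$j) * (B$i$k * w$k) / complex_of_real d)"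
        proof (intro sum.cong refl)
          fix j k
          have e: "B$j$i = cnj (B$i$j)" by (rule herm_entry[OF hB])
          show "cnj (w$j) * (B$j$i * B$i$k * w$k) / complex_of_real d =
                cnj (B$i$j * w$j) * (B$i$k * w$k) / complex_of_real d"
            unfolding e by (simp add: algebra_simps)
        qed
        also have "\<dots> = cnj s * s / complex_of_real d"
          by (simp add: s_def cnj_sum sum_distrib_left sum_distrib_right sum_divide_distrib,
              subst sum.swap, rule refl)
        finally show ?thesis by (simp add: algebra_simps)
      qed
      moreover have "cmod s * cmod s = Re s * Re s + Im s * Im s"
        using cmod_power2[of s] by (simp add: power2_eq_square)
      ultimately have "w \<bullet> (B' *v w) = w \<bullet> (B *v w) - (cmod s)^2 / d"
        by (simp add: Re_qform[symmetric] complex_norm_square Re_divide_of_real mult.commute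
            power2_eq_square)
      moreover have "(cmod s)^2 \<le> (w \<bullet> (B *v w)) * d"
        using cs_bound[OF less.prems(1), of i w] by (simp add: s_def d_def)
      ultimately have "0 \<le> d * (w \<bullet> (B' *v w))" using dp by (simp add: field_simps)
      then show ?thesis using dp by (simp add: zero_le_mult_iff)
    qed
    have pB': "psd B'" using hB' qB' by (simp add: psd_iff)
    have sub: "{j. B' $ j $ j \<noteq> 0} \<subseteq> {j. B $ j $ j \<noteq> 0} - {i}"
    proof
      fix j assume "j \<in> {j. B' $ j $ j \<noteq> 0}"
      then have nz: "B' $ j $ j \<noteq> 0" by simp
      have "j \<noteq> i"
      proof
        assume "j = i"
        then have "B' $ j $ j = 0" using dp by (simp add: B'_def Bii)
        then show False using nz by simp
      qed
      moreover have "B $ j $ j \<noteq> 0"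
      proof
        assume z: "B $ j $ j = 0"
        have "B $ i $ j = 0" by (rule psd_col_zero[OF less.prems(1) z])
        then have "B' $ j $ j = 0" using z by (simp add: B'_def)
        then show False using nz by simp
      qed
      ultimately show "j \<in> {j. B $ j $ j \<noteq> 0} - {i}" by simp
    qed
    have "card {j. B' $ j $ j \<noteq> 0} < n"
    proof -
      have "{j. B' $ j $ j \<noteq> 0} \<subset> {j. B $ j $ j \<noteq> 0}" using sub i by blast
      then have "card {j. B' $ j $ j \<noteq> 0} < card {j. B $ j $ j \<noteq> 0}"
        by (intro psubset_card_mono) auto
      then show ?thesis using less.prems(2) by simp
    qed
    then have "0 \<le> Re (trace (A ** B'))" using less.IH pB' by blast
    then show ?thesis using split qA by simp
  qed
qed

lemma psd_trace: "psd A \<Longrightarrow> psd B \<Longrightarrow> 0 \<le> tr (A ** B)"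
  unfolding tr_def using psd_trace_aux by blast




lemma tr_add: "tr ((X + Y) ** G) = tr (X ** G) + tr (Y ** G)" for X :: "'n::finite cmat"
  by (simp add: tr_def tr_mult algebra_simps sum.distrib)

lemma tr_diff: "tr ((X - Y) ** G) = tr (X ** G) - tr (Y ** G)" for X :: "'n::finite cmat"
  by (simp add: tr_def tr_mult algebra_simps sum_subtractf)

lemma tr_scaleR: "tr ((c *\<^sub>R X) ** G) = c * tr (X ** G)" for X :: "'n::finite cmat"
proof -
  have "trace ((c *\<^sub>R X) ** G) = complex_of_real c * trace (X ** G)"
    by (simp add: tr_mult cs sum_distrib_left mult.assoc)
  then show ?thesis by (simp add: tr_def)
qed

lemma tr_one: "tr (mat 1 ** G) = tr G" for G :: "'n::finite cmat"
  by (simp add: matrix_mul_lid)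

lemma loewner_tr: "loewner_le X Y \<Longrightarrow> psd G \<Longrightarrow> tr (X ** G) \<le> tr (Y ** G)"
  for X :: "'n::finite cmat"
  using psd_trace[of "Y - X" G] by (simp add: loewner_le_def tr_diff)

lemma mv_linear: "linear (\<lambda>v. (Q :: 'n::finite cmat) *v v)"
  by (rule linearI) (simp_all add: matrix_vector_right_distrib mv_scaleR)

lemma mv_bl: "bounded_linear (\<lambda>v. (Q :: 'n::finite cmat) *v v)"
  using mv_linear linear_conv_bounded_linear by blast

lemma povm_iff: "povm_effect Q \<longleftrightarrow> psd Q \<and> psd (mat 1 - Q)"
  by (simp add: povm_effect_def loewner_le_def)

lemma opnorm_le1:
  fixes Q :: "'n::finite cmat"
  assumes "povm_effect Q"
  shows "opnorm Q \<le> 1"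
  unfolding opnorm_def
proof (rule onorm_le)
  fix v :: "complex^'n"
  have p: "psd Q" "psd (mat 1 - Q)" using assms by (auto simp: povm_iff)
  define u where "u = Q *v v"
  have le: "x \<bullet> (Q *v x) \<le> x \<bullet> x" for x
    using p(2) by (simp add: psd_iff matrix_vector_mult_diff_rdistrib inner_diff_right)
  have ge: "0 \<le> x \<bullet> (Q *v x)" for x using p(1) by (simp add: psd_iff)
  have "(u \<bullet> (Q *v v))^2 \<le> (u \<bullet> (Q *v u)) * (v \<bullet> (Q *v v))" by (rule psd_cs[OF p(1)])
  also have "\<dots> \<le> (u \<bullet> u) * (v \<bullet> v)" by (intro mult_mono le ge) simp
  finally have "(norm u)^2 * (norm u)^2 \<le> (norm u)^2 * (norm v)^2"
    by (simp add: u_def dot_square_norm power2_eq_square)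
  then have "norm u \<le> norm v"
  proof (cases "norm u = 0")
    case False
    assume a: "(norm u)^2 * (norm u)^2 \<le> (norm u)^2 * (norm v)^2"
    have "0 < (norm u)^2" using False by simp
    then have "(norm u)^2 \<le> (norm v)^2" using a mult_le_cancel_left_pos by blast
    then show ?thesis by (rule power2_le_imp_le) simp
  qed simp
  then show "norm (Q *v v) \<le> 1 * norm v" by (simp add: u_def)
qed

lemma le_opnorm:
  fixes Q :: "'n::finite cmat"
  assumes "psd Q"
  shows "loewner_le Q (opnorm Q *\<^sub>R mat 1)"
proof -
  have h: "cadj Q = Q" using assms by (simp add: psd_iff)
  have "0 \<le> v \<bullet> ((opnorm Q *\<^sub>R mat 1 - Q) *v v)" for v
  proof -
    have "v \<bullet> (Q *v v) \<le> norm v * norm (Q *v v)" by (rule norm_cauchy_schwarz)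
    also have "\<dots> \<le> norm v * (opnorm Q * norm v)"
      using onorm[OF mv_bl, of Q v] by (simp add: opnorm_def mult_left_mono)
    finally show ?thesis
      by (simp add: matrix_vector_mult_diff_rdistrib inner_diff_right scaleR_mv
          power2_norm_eq_inner[symmetric] power2_eq_square algebra_simps)
  qed
  then show ?thesis using h
    by (simp add: loewner_le_def psd_iff cadj_diff cadj_scaleR cadj_one)
qed

lemma cadj_linear: "linear (cadj :: 'n::finite cmat \<Rightarrow> 'n cmat)"
  by (rule linearI) (simp_all add: cadj_add cadj_scaleR)

lemma mvQ_linear: "linear (\<lambda>Q :: 'n::finite cmat. Q *v v)"
  by (rule linearI) (simp_all add: matrix_vector_mult_add_rdistrib scaleR_mv)

lemma closed_psd: "closed {Q :: 'n::finite cmat. psd Q}"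
proof -
  have c1: "continuous_on UNIV (cadj :: 'n cmat \<Rightarrow> 'n cmat)"
    using cadj_linear linear_continuous_on linear_conv_bounded_linear by blast
  have c2: "continuous_on UNIV (\<lambda>Q :: 'n cmat. v \<bullet> (Q *v v))" for v
  proof -
    have "continuous_on UNIV (\<lambda>Q :: 'n cmat. Q *v v)"
      using mvQ_linear linear_continuous_on linear_conv_bounded_linear by blast
    then show ?thesis by (intro continuous_intros)
  qed
  have "{Q :: 'n cmat. psd Q} = {Q. cadj Q = Q} \<inter> {Q. \<forall>v. 0 \<le> v \<bullet> (Q *v v)}"
    by (auto simp: psd_iff)
  also have "closed \<dots>"
    by (intro closed_Int closed_Collect_eq closed_Collect_all closed_Collect_le c1 c2
        continuous_on_id continuous_on_const)
  finally show ?thesis .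
qed

lemma closed_povm: "closed {Q :: 'n::finite cmat. povm_effect Q}"
proof -
  have "{Q :: 'n cmat. povm_effect Q} = {Q. psd Q} \<inter> (\<lambda>Q. mat 1 - Q) -` {Q. psd Q}"
    by (auto simp: povm_iff)
  also have "closed \<dots>"
    by (intro closed_Int closed_psd closed_vimage continuous_intros)
  finally show ?thesis .
qed

lemma Minf_povm:
  assumes "measurement_family M" "Q \<in> Minf M"
  shows "povm_effect Q"
proof -
  have "(\<Union>r\<in>{0..}. M r) \<subseteq> {Q. povm_effect Q}"
    using assms(1) by (auto simp: measurement_family_def)
  then have "Minf M \<subseteq> {Q. povm_effect Q}"
    unfolding Minf_def by (rule closure_minimal) (rule closed_povm)
  then show ?thesis using assms(2) by blast
qed

lemma one_Minf:
  assumes "measurement_family M"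
  shows "mat 1 \<in> Minf M"
proof -
  have "mat 1 \<in> M 0" using assms unfolding measurement_family_def by (elim conjE)
  then have "mat 1 \<in> (\<Union>r\<in>{0..}. M r)" by (intro UN_I[of 0]) simp_all
  then show ?thesis unfolding Minf_def by (rule subsetD[OF closure_subset])
qed



lemma eln_mono: "x \<le> y \<Longrightarrow> eln x \<le> eln y"
  by (auto simp: eln_def)

lemma eln_mult: "0 < K \<Longrightarrow> eln (K * y) = ereal (ln K) + eln y"
  by (auto simp: eln_def ln_mult zero_less_mult_iff)

lemma final_ineq:
  assumes "eln X \<le> eln Y + ereal (q + L)"
  shows "- eln Y - ereal q - ereal L \<le> - eln X \<and> - (- eln X) \<le> - (- eln Y) + ereal q + ereal L"
  using assms by (auto simp: eln_def split: if_splits)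

lemma partA:
  fixes \<rho> \<Gamma> :: "'n::finite cmat"
  assumes r: "psd \<rho>" and G: "psd \<Gamma>" and M: "measurement_family M"
    and e: "0 < \<eta>" "\<eta> \<le> tr \<rho>"
  shows "DinfH M \<eta> \<rho> \<Gamma> \<le> DH \<eta> \<rho> \<Gamma>"
proof -
  define SA where "SA = {tr (Q ** \<Gamma>) / \<eta> | Q. povm_effect Q \<and> tr (Q ** \<rho>) \<ge> \<eta>}"
  define SB where "SB = {tr (Q ** \<Gamma>) / tr (Q ** \<rho>) | Q. Q \<in> Minf M \<and> tr (Q ** \<rho>) \<ge> \<eta>}"
  have "Inf SA \<le> Inf SB"
  proof (rule cInf_mono)
    have "tr (mat 1 ** \<Gamma>) / tr (mat 1 ** \<rho>) \<in> SB"
      unfolding SB_def mem_Collect_eq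
      by (rule exI[of _ "mat 1"]) (use one_Minf[OF M] e in \<open>simp add: tr_one\<close>)
    then show "SB \<noteq> {}" by blast
    show "bdd_below SA"
    proof (rule bdd_belowI)
      fix x assume "x \<in> SA"
      then obtain Q where "x = tr (Q ** \<Gamma>) / \<eta>" "povm_effect Q" by (auto simp: SA_def)
      then show "0 \<le> x" using psd_trace[of Q \<Gamma>] G e by (simp add: povm_iff)
    qed
    fix b assume "b \<in> SB"
    then obtain Q where Q: "Q \<in> Minf M" "tr (Q ** \<rho>) \<ge> \<eta>" "b = tr (Q ** \<Gamma>) / tr (Q ** \<rho>)"
      by (auto simp: SB_def)
    define t where "t = tr (Q ** \<rho>)"
    have tp: "0 < t" using Q e by (simp add: t_def)
    have le1: "\<eta> / t \<le> 1" using Q tp by (simp add: t_def)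
    have pQ: "psd Q" "psd (mat 1 - Q)" using Minf_povm[OF M Q(1)] by (auto simp: povm_iff)
    define Q' where "Q' = (\<eta> / t) *\<^sub>R Q"
    have eq: "mat 1 - Q' = (mat 1 - Q) + (1 - \<eta> / t) *\<^sub>R Q"
      by (simp add: Q'_def algebra_simps)
    have p2: "psd (mat 1 - Q')" unfolding eq
      by (intro psd_add psd_scaleR pQ) (use le1 in simp)
    have p1: "psd Q'" unfolding Q'_def
      by (intro psd_scaleR pQ) (use e tp in simp)
    have "povm_effect Q'" using p1 p2 by (simp add: povm_iff)
    moreover have "tr (Q' ** \<rho>) = \<eta>" using tp by (simp add: Q'_def tr_scaleR t_def)
    moreover have "tr (Q' ** \<Gamma>) / \<eta> = b" using tp e by (simp add: Q'_def tr_scaleR Q(3) t_def)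
    ultimately have "b \<in> SA" unfolding SA_def by (metis (mono_tags, lifting) mem_Collect_eq order_refl)
    then show "\<exists>a\<in>SA. a \<le> b" by blast
  qed
  then have "eln (Inf SA) \<le> eln (Inf SB)" by (rule eln_mono)
  then show ?thesis by (simp add: DinfH_def DH_def SA_def[symmetric] SB_def[symmetric])
qed


lemma partB:
  fixes \<rho> \<Gamma> :: "'n::finite cmat"
  assumes r: "psd \<rho>" and G: "psd \<Gamma>" and M: "measurement_family M"
    and e: "0 < \<eta>" "\<eta> \<le> tr \<rho>" and g: "0 < g" "g < 1"
    and QU: "quasiuniversal q (Minf M) \<Gamma>"
  shows "eln (Inf {tr (Q ** \<Gamma>) / tr (Q ** \<rho>) | Q. Q \<in> Minf M \<and> tr (Q ** \<rho>) \<ge> \<eta>})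
    \<le> eln (Inf {tr (Q ** \<Gamma>) / ((1 - g) * \<eta> + g * tr \<rho>) | Q. povm_effect Q \<and>
               tr (Q ** \<rho>) \<ge> (1 - g) * \<eta> + g * tr \<rho>})
      + ereal (q + ln (tr \<rho> / (g * \<eta>)))"
proof -
  define eg where "eg = (1 - g) * \<eta> + g * tr \<rho>"
  define SA where "SA = {tr (Q ** \<Gamma>) / eg | Q. povm_effect Q \<and> tr (Q ** \<rho>) \<ge> eg}"
  define SB where "SB = {tr (Q ** \<Gamma>) / tr (Q ** \<rho>) | Q. Q \<in> Minf M \<and> tr (Q ** \<rho>) \<ge> \<eta>}"
  define K where "K = exp q * (tr \<rho> / (g * \<eta>))"
  have trp: "0 < tr \<rho>" using e by simp
  have egp: "0 < eg" unfolding eg_def using e g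
    by (intro add_pos_pos mult_pos_pos) simp_all
  have Kp: "0 < K" unfolding K_def using trp e g by simp
  have bddB: "bdd_below SB"
  proof (rule bdd_belowI)
    fix x assume "x \<in> SB"
    then obtain Q where "x = tr (Q ** \<Gamma>) / tr (Q ** \<rho>)" "Q \<in> Minf M" "tr (Q ** \<rho>) \<ge> \<eta>"
      by (auto simp: SB_def)
    then show "0 \<le> x" using psd_trace[of Q \<Gamma>] Minf_povm[OF M] G e
      by (simp add: povm_iff)
  qed
  have neA: "SA \<noteq> {}"
  proof -
    have "tr (mat 1 ** \<Gamma>) / eg \<in> SA"
      unfolding SA_def mem_Collect_eq
    proof (rule exI[of _ "mat 1"])
      have "(1 - g) * \<eta> \<le> (1 - g) * tr \<rho>" using e g by (intro mult_left_mono) simp_all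
      then show "tr (mat 1 ** \<Gamma>) / eg = tr (mat 1 ** \<Gamma>) / eg \<and> povm_effect (mat 1) \<and> eg \<le> tr (mat 1 ** \<rho>)"
        by (simp add: tr_one povm_iff psd_one psd_zero eg_def algebra_simps)
    qed
    then show ?thesis by blast
  qed
  have key: "Inf SB \<le> K * x" if "x \<in> SA" for x
  proof -
    obtain Q where Q: "x = tr (Q ** \<Gamma>) / eg" "povm_effect Q" "tr (Q ** \<rho>) \<ge> eg"
      using \<open>x \<in> SA\<close> by (auto simp: SA_def)
    have pQ: "psd Q" using Q(2) by (simp add: povm_iff)
    define c where "c = opnorm Q"
    have trQ: "tr (Q ** \<rho>) \<le> c * tr \<rho>"
      using loewner_tr[OF le_opnorm[OF pQ] r] by (simp add: c_def tr_scaleR tr_one)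
    have cp: "0 < c"
    proof (rule ccontr)
      assume "\<not> 0 < c"
      then have "c * tr \<rho> \<le> 0" using trp by (simp add: mult_nonpos_nonneg)
      then show False using trQ Q(3) egp by simp
    qed
    have c1: "c \<le> 1" unfolding c_def by (rule opnorm_le1[OF Q(2)])
    have egc: "eg \<le> c * tr \<rho>" using trQ Q(3) by simp
    define Q' where "Q' = (1 / c) *\<^sub>R Q"
    have eq: "mat 1 - Q' = (1 / c) *\<^sub>R (c *\<^sub>R mat 1 - Q)"
      using cp by (simp add: Q'_def scaleR_diff_right)
    have p2: "psd (mat 1 - Q')" unfolding eq
      using le_opnorm[OF pQ] cp by (intro psd_scaleR) (simp_all add: loewner_le_def c_def)
    have p1: "psd Q'" unfolding Q'_def using pQ cp by (intro psd_scaleR) simp_all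
    have povQ': "povm_effect Q'" using p1 p2 by (simp add: povm_iff)
    have "opnorm Q' = \<bar>1 / c\<bar> * opnorm Q"
    proof -
      have "(\<lambda>v. Q' *v v) = (\<lambda>v. (1 / c) *\<^sub>R (Q *v v))" by (simp add: Q'_def scaleR_mv)
      then show ?thesis unfolding opnorm_def using onorm_scaleR[OF mv_bl, of "1 / c" Q]
        by (simp only:)
    qed
    then have n1: "opnorm Q' = 1" using cp by (simp add: c_def)
    obtain Qt Qt' where Qt: "Qt \<in> Minf M" "Qt' \<in> Minf M"
      "loewner_le (g *\<^sub>R Qt) Q'" "loewner_le Q' ((1 - g) *\<^sub>R Qt' + g *\<^sub>R mat 1)"
      "tr (Qt' ** \<Gamma>) \<le> exp q * tr (Qt ** \<Gamma>)"
      using QU povQ' n1 g unfolding quasiuniversal_def by blast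
    have trQ'r: "tr (Q' ** \<rho>) = tr (Q ** \<rho>) / c" by (simp add: Q'_def tr_scaleR)
    have trQ'G: "tr (Q' ** \<Gamma>) = tr (Q ** \<Gamma>) / c" by (simp add: Q'_def tr_scaleR)
    have trQnn: "0 \<le> tr (Q ** \<rho>)" using egp Q(3) by simp
    have "tr (Q ** \<rho>) \<le> tr (Q ** \<rho>) / c"
      using trQnn cp c1 by (simp add: le_divide_eq mult_left_le)
    then have A1: "eg \<le> tr (Q' ** \<rho>)" using Q(3) trQ'r by simp
    have A2: "tr (Q' ** \<rho>) \<le> (1 - g) * tr (Qt' ** \<rho>) + g * tr \<rho>"
      using loewner_tr[OF Qt(4) r] by (simp add: tr_add tr_scaleR tr_one)
    have "(1 - g) * \<eta> \<le> (1 - g) * tr (Qt' ** \<rho>)" using A1 A2 by (simp add: eg_def)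
    then have Qt'r: "\<eta> \<le> tr (Qt' ** \<rho>)" using g by simp
    define b where "b = tr (Qt' ** \<Gamma>) / tr (Qt' ** \<rho>)"
    have bSB: "b \<in> SB" unfolding SB_def b_def using Qt(2) Qt'r by blast
    have Gt'nn: "0 \<le> tr (Qt' ** \<Gamma>)"
      using psd_trace[of Qt' \<Gamma>] Minf_povm[OF M Qt(2)] G by (simp add: povm_iff)
    have GQnn: "0 \<le> tr (Q ** \<Gamma>)" using psd_trace[OF pQ G] .
    have B1: "g * tr (Qt ** \<Gamma>) \<le> tr (Q ** \<Gamma>) / c"
      using loewner_tr[OF Qt(3) G] trQ'G by (simp add: tr_scaleR)
    have "b \<le> tr (Qt' ** \<Gamma>) / \<eta>"
      unfolding b_def using Gt'nn Qt'r e by (intro divide_left_mono) simp_all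
    also have "\<dots> \<le> exp q * tr (Qt ** \<Gamma>) / \<eta>"
      using Qt(5) e by (simp add: divide_right_mono)
    also have "\<dots> \<le> exp q * (tr (Q ** \<Gamma>) / c / g) / \<eta>"
    proof -
      have "tr (Qt ** \<Gamma>) \<le> tr (Q ** \<Gamma>) / c / g" using B1 g cp by (simp add: field_simps)
      then show ?thesis using e by (intro divide_right_mono mult_left_mono) simp_all
    qed
    also have "\<dots> = exp q / (g * \<eta>) * (tr (Q ** \<Gamma>) * (1 / c))" by simp
    also have "\<dots> \<le> exp q / (g * \<eta>) * (tr (Q ** \<Gamma>) * (tr \<rho> / eg))"
    proof -
      have "1 / c \<le> tr \<rho> / eg" using egc cp egp by (simp add: field_simps)
      then show ?thesis using GQnn e g by (intro mult_left_mono) simp_all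
    qed
    also have "\<dots> = K * x" by (simp add: K_def Q(1))
    finally have "b \<le> K * x" .
    moreover have "Inf SB \<le> b" by (rule cInf_lower[OF bSB bddB])
    ultimately show ?thesis by simp
  qed
  have "Inf SB / K \<le> Inf SA"
  proof (rule cInf_greatest[OF neA])
    fix x assume "x \<in> SA"
    then show "Inf SB / K \<le> x" using key[of x] Kp by (simp add: divide_le_eq mult.commute)
  qed
  then have "Inf SB \<le> K * Inf SA" using Kp by (simp add: divide_le_eq mult.commute)
  then have "eln (Inf SB) \<le> eln (K * Inf SA)" by (rule eln_mono)
  also have "\<dots> = ereal (ln K) + eln (Inf SA)" by (rule eln_mult[OF Kp])
  also have "ln K = q + ln (tr \<rho> / (g * \<eta>))"
  proof -
    have "0 < tr \<rho> / (g * \<eta>)" using trp e g by simp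
    then show ?thesis unfolding K_def ln_mult using trp e g by simp
  qed
  finally show ?thesis by (simp add: SA_def SB_def eg_def add.commute)
qed


theorem theoremI3:
  fixes \<rho> \<Gamma> :: "'n::finite cmat"
    and M :: "real \<Rightarrow> 'n cmat set"
    and q \<eta> g :: real
  assumes "subnormalized_state \<rho>"
    and "psd \<Gamma>"
    and "measurement_family M"
    and "0 \<le> q"
    and "0 < \<eta>" and "\<eta> \<le> tr \<rho>"
    and "0 < g" and "g < 1"
  shows "(quasiuniversal q (Minf M) \<Gamma> \<longrightarrow>
            DH \<eta> \<rho> \<Gamma> \<ge> DinfH M \<eta> \<rho> \<Gamma> \<and>
            DinfH M \<eta> \<rho> \<Gamma> \<ge> DH ((1 - g) * \<eta> + g * tr \<rho>) \<rho> \<Gamma>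
                 - ereal q - ereal (ln (tr \<rho> / (g * \<eta>))))
       \<and> (quasiuniversal q (Minf M) (mat 1) \<longrightarrow>
            HH \<eta> \<rho> \<le> HinfH M \<eta> \<rho> \<and>
            HinfH M \<eta> \<rho> \<le> HH ((1 - g) * \<eta> + g * tr \<rho>) \<rho>
                 + ereal q + ereal (ln (tr \<rho> / (g * \<eta>))))"
proof (intro conjI impI)
  have r: "psd \<rho>" using assms(1) by (simp add: subnormalized_state_def)
  {
    assume QU: "quasiuniversal q (Minf M) \<Gamma>"
    show "DH \<eta> \<rho> \<Gamma> \<ge> DinfH M \<eta> \<rho> \<Gamma>"
      by (rule partA[OF r assms(2,3,5,6)])
    show "DinfH M \<eta> \<rho> \<Gamma> \<ge> DH ((1 - g) * \<eta> + g * tr \<rho>) \<rho> \<Gamma>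
                 - ereal q - ereal (ln (tr \<rho> / (g * \<eta>)))"
      using final_ineq[OF partB[OF r assms(2,3,5,6,7,8) QU]]
      unfolding DinfH_def DH_def by blast
  }
  {
    assume QU: "quasiuniversal q (Minf M) (mat 1)"
    show "HH \<eta> \<rho> \<le> HinfH M \<eta> \<rho>"
      using partA[OF r psd_one assms(3,5,6)] unfolding HH_def HinfH_def by simp
    show "HinfH M \<eta> \<rho> \<le> HH ((1 - g) * \<eta> + g * tr \<rho>) \<rho>
                 + ereal q + ereal (ln (tr \<rho> / (g * \<eta>)))"
      using final_ineq[OF partB[OF r psd_one assms(3,5,6,7,8) QU]]
      unfolding DinfH_def DH_def HH_def HinfH_def by blast
  }
qed

end
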